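(* Let $G$ be a simple graph of order $n \ge 4$. If $$\mu(\overline{G}) < \sqrt{\frac{(n-2)^2}{n}},$$ then $G$ is Hamilton-connected.
   Context: $\overline{G}$ denotes the complement of $G$. For a simple graph $H$, $\mu(H)$ denotes the largest eigenvalue (spectral radius) of the adjacency matrix of $H$. A graph is Hamilton-connected if every two distinct vertices are joined by a Hamiltonian path (a path containing all vertices). *)

theory Defs
  imports "Jordan_Normal_Form.Char_Poly"
begin

definition simple_graph :: "nat \<Rightarrow> (nat \<Rightarrow> nat \<Rightarrow> bool) \<Rightarrow> bool" where
  "simple_graph n E \<longleftrightarrow>
     (\<forall>u v. E u v \<longrightarrow> u < n \<and> v < n) \<and>
     (\<forall>u v. E u v \<longrightarrow> E v u) \<and> (\<forall>u. \<not> E u u)"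

definition complement :: "nat \<Rightarrow> (nat \<Rightarrow> nat \<Rightarrow> bool) \<Rightarrow> nat \<Rightarrow> nat \<Rightarrow> bool" where
  "complement n E u v \<longleftrightarrow> u < n \<and> v < n \<and> u \<noteq> v \<and> \<not> E u v"

definition adjacency_matrix :: "nat \<Rightarrow> (nat \<Rightarrow> nat \<Rightarrow> bool) \<Rightarrow> real mat" where
  "adjacency_matrix n E = mat n n (\<lambda>(i, j). if E i j then 1 else 0)"

definition spectral_radius_graph :: "nat \<Rightarrow> (nat \<Rightarrow> nat \<Rightarrow> bool) \<Rightarrow> real" where
  "spectral_radius_graph n E = Max {k. eigenvalue (adjacency_matrix n E) k}"

definition hamiltonian_path :: "nat \<Rightarrow> (nat \<Rightarrow> nat \<Rightarrow> bool) \<Rightarrow> nat \<Rightarrow> nat \<Rightarrow> nat list \<Rightarrow> bool" where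
  "hamiltonian_path n E u v p \<longleftrightarrow>
     p \<noteq> [] \<and> distinct p \<and> set p = {0..<n} \<and> hd p = u \<and> last p = v \<and>
     (\<forall>i. Suc i < length p \<longrightarrow> E (p ! i) (p ! Suc i))"

definition hamilton_connected :: "nat \<Rightarrow> (nat \<Rightarrow> nat \<Rightarrow> bool) \<Rightarrow> bool" where
  "hamilton_connected n E \<longleftrightarrow>
     (\<forall>u v. u < n \<and> v < n \<and> u \<noteq> v \<longrightarrow> (\<exists>p. hamiltonian_path n E u v p))"

end

theory Submission
  imports Defs "Jordan_Normal_Form.Spectral_Radius" "HOL-Analysis.Function_Topology"
begin


definition qf :: "nat \<Rightarrow> (nat \<Rightarrow> nat \<Rightarrow> real) \<Rightarrow> (nat \<Rightarrow> real) \<Rightarrow> real" where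
  "qf n a x = (\<Sum>i<n. \<Sum>j<n. a i j * x i * x j)"

definition nrm :: "nat \<Rightarrow> (nat \<Rightarrow> real) \<Rightarrow> real" where
  "nrm n x = (\<Sum>i<n. (x i)^2)"

lemma nrm_nonneg: "nrm n x \<ge> 0"
  unfolding nrm_def by (intro sum_nonneg) auto

lemma nrm_zero: assumes "nrm n x = 0" "i < n" shows "x i = 0"
proof -
  have "\<forall>i\<in>{..<n}. (x i)^2 = 0"
    using assms(1) unfolding nrm_def by (subst sum_nonneg_eq_0_iff[symmetric]) auto
  then show ?thesis using assms(2) by auto
qed

lemma qf_cong: assumes "\<And>i. i < n \<Longrightarrow> x i = y i" shows "qf n a x = qf n a y"
  unfolding qf_def using assms by (intro sum.cong refl) auto

lemma nrm_cong: assumes "\<And>i. i < n \<Longrightarrow> x i = y i" shows "nrm n x = nrm n y"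
  unfolding nrm_def using assms by (intro sum.cong refl) auto

lemma qf_scale: "qf n a (\<lambda>i. c * x i) = c^2 * qf n a x"
  unfolding qf_def power2_eq_square by (simp add: sum_distrib_left algebra_simps)

lemma nrm_scale: "nrm n (\<lambda>i. c * x i) = c^2 * nrm n x"
  unfolding nrm_def by (simp add: sum_distrib_left algebra_simps power_mult_distrib)

lemma rayleigh_max:
  assumes n: "n > 0"
  shows "\<exists>x0. nrm n x0 = 1 \<and> (\<forall>x. qf n a x \<le> qf n a x0 * nrm n x)"
proof -
  define C where "C = (Pi UNIV (\<lambda>i. if i < n then {-1..(1::real)} else {0}))"
  define K where "K = C \<inter> {x. nrm n x = 1}"
  have cC: "compact C"
  proof -
    have "compactin (product_topology (\<lambda>i. euclideanreal) UNIV) (PiE UNIV (\<lambda>i. if i < n then {-1..(1::real)} else {0}))"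
      by (subst compactin_PiE) auto
    then show ?thesis unfolding C_def euclidean_product_topology PiE_UNIV_domain by simp
  qed
  have contn: "continuous_on UNIV (nrm n)"
    unfolding nrm_def by (intro continuous_intros continuous_on_product_coordinates)
  have contq: "continuous_on UNIV (qf n a)"
    unfolding qf_def by (intro continuous_intros continuous_on_product_coordinates)
  have "closed {x. nrm n x = 1}"
    using contn by (intro closed_Collect_eq) auto
  then have cK: "compact K" unfolding K_def using cC compact_Int_closed by blast
  define e0 where "e0 = (\<lambda>i::nat. if i = 0 then (1::real) else 0)"
  have sq: "(e0 i)^2 = e0 i" for i by (simp add: e0_def)
  have "nrm n e0 = 1" unfolding nrm_def sq using n by (simp add: e0_def)
  then have "e0 \<in> K" unfolding K_def C_def using n by (auto simp: e0_def)
  then have "K \<noteq> {}" by auto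
  from continuous_attains_sup[OF cK this continuous_on_subset[OF contq]]
  obtain x0 where x0: "x0 \<in> K" "\<And>y. y \<in> K \<Longrightarrow> qf n a y \<le> qf n a x0" by auto
  have "qf n a x \<le> qf n a x0 * nrm n x" for x
  proof (cases "nrm n x = 0")
    case True
    then have "qf n a x = qf n a (\<lambda>_. 0)" by (intro qf_cong) (simp add: nrm_zero)
    then show ?thesis using True by (simp add: qf_def)
  next
    case False
    then have pos: "nrm n x > 0" using nrm_nonneg[of n x] by auto
    define r where "r = sqrt (nrm n x)"
    have r: "r > 0" "r^2 = nrm n x" using pos unfolding r_def by auto
    define y where "y = (\<lambda>i. if i < n then (1/r) * x i else 0)"
    have ny: "nrm n y = 1"
    proof -
      have "nrm n y = nrm n (\<lambda>i. (1/r) * x i)" by (rule nrm_cong) (simp add: y_def)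
      also have "\<dots> = 1" using r pos nrm_scale[of n "1/r" x] by (simp add: power_divide)
      finally show ?thesis .
    qed
    have "y \<in> C"
    proof -
      have "y i \<in> {-1..1}" if "i < n" for i
      proof -
        have "(y i)^2 \<le> nrm n y" unfolding nrm_def
          using that by (intro member_le_sum) auto
        then have "(y i)^2 \<le> 1^2" using ny by simp
        then have "\<bar>y i\<bar> \<le> \<bar>1\<bar>" using abs_le_square_iff by blast
        then show ?thesis by auto
      qed
      then show ?thesis unfolding C_def y_def by auto
    qed
    then have "y \<in> K" using ny unfolding K_def by auto
    then have "qf n a y \<le> qf n a x0" by (rule x0(2))
    moreover have "qf n a y = qf n a x / nrm n x"
    proof -
      have "qf n a y = qf n a (\<lambda>i. (1/r) * x i)" by (rule qf_cong) (simp add: y_def)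
      also have "\<dots> = qf n a x / nrm n x" using r pos qf_scale[of n a "1/r" x] by (simp add: power_divide)
      finally show ?thesis .
    qed
    ultimately have "qf n a x / nrm n x \<le> qf n a x0" by simp
    then show ?thesis using pos by (simp add: divide_le_eq)
  qed
  moreover have "nrm n x0 = 1" using x0(1) unfolding K_def by auto
  ultimately show ?thesis by blast
qed

definition bil :: "nat \<Rightarrow> (nat \<Rightarrow> nat \<Rightarrow> real) \<Rightarrow> (nat \<Rightarrow> real) \<Rightarrow> (nat \<Rightarrow> real) \<Rightarrow> real" where
  "bil n a x y = (\<Sum>i<n. \<Sum>j<n. a i j * x i * y j)"

definition dot :: "nat \<Rightarrow> (nat \<Rightarrow> real) \<Rightarrow> (nat \<Rightarrow> real) \<Rightarrow> real" where
  "dot n x y = (\<Sum>i<n. x i * y i)"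

lemma qf_add: "qf n a (\<lambda>i. x i + t * y i) = qf n a x + t * (bil n a x y + bil n a y x) + t^2 * qf n a y"
proof -
  have *: "a i j * (x i + t*y i) * (x j + t*y j) = a i j * x i * x j + t*(a i j * x i * y j + a i j * y i * x j) + t^2*(a i j*y i*y j)" for i j
    by (simp add: algebra_simps power2_eq_square)
  show ?thesis unfolding qf_def bil_def * by (simp add: sum.distrib sum_distrib_left distrib_left)
qed

lemma nrm_add: "nrm n (\<lambda>i. x i + t * y i) = nrm n x + 2 * t * dot n x y + t^2 * nrm n y"
proof -
  have *: "(x i + t*y i)^2 = (x i)^2 + 2 * t * (x i * y i) + t^2*(y i)^2" for i
    by (simp add: algebra_simps power2_eq_square)
  show ?thesis unfolding nrm_def dot_def * by (simp add: sum.distrib sum_distrib_left)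
qed

lemma quad_nonpos:
  fixes c K :: real
  assumes "\<And>t. 2*t*c + t^2*K \<le> 0"
  shows "c = 0"
proof (rule ccontr)
  assume c: "c \<noteq> 0"
  define L where "L = \<bar>K\<bar> + 1"
  have L: "L > 0" unfolding L_def by auto
  have "2*(c/L)*c + (c/L)^2*K \<le> 0" by (rule assms)
  then have A: "(2*L + K) * (c^2 / L^2) \<le> 0"
    using L by (simp add: power2_eq_square field_simps)
  have B: "c^2/L^2 > 0" using c L by simp
  have "2*L + K \<le> 0"
  proof (rule ccontr)
    assume "\<not> 2*L + K \<le> 0"
    then have "2*L + K > 0" by simp
    then have "(2*L + K) * (c^2 / L^2) > 0" using B by (rule mult_pos_pos)
    then show False using A by simp
  qed
  then show False unfolding L_def by (auto simp: abs_if split: if_splits)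
qed

lemma eigen_eq:
  assumes sym: "\<And>i j. a i j = a j i" and x0: "nrm n x0 = 1" "\<And>x. qf n a x \<le> qf n a x0 * nrm n x"
    and i: "i < n"
  shows "(\<Sum>j<n. a i j * x0 j) = qf n a x0 * x0 i"
proof -
  define e where "e = (\<lambda>j. if j = i then (1::real) else 0)"
  define M where "M = qf n a x0"
  define s where "s = (\<Sum>j<n. a i j * x0 j)"
  have sd: "(\<Sum>k<n. e k * f k) = f i" for f :: "nat \<Rightarrow> real"
    unfolding e_def using i
    by (subst sum.cong[OF refl, of _ _ "\<lambda>k. if k = i then f k else 0"]) auto
  have "bil n a x0 e = (\<Sum>j<n. e j * (\<Sum>k<n. a k j * x0 k))"
    unfolding bil_def by (subst sum.swap) (simp add: sum_distrib_left algebra_simps)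
  also have "\<dots> = s" unfolding sd s_def by (simp add: sym[of _ i] mult.commute)
  finally have b1: "bil n a x0 e = s" .
  have "bil n a e x0 = (\<Sum>k<n. e k * (\<Sum>j<n. a k j * x0 j))"
    unfolding bil_def by (simp add: sum_distrib_left algebra_simps)
  also have "\<dots> = s" unfolding sd s_def ..
  finally have b2: "bil n a e x0 = s" .
  have "qf n a e = (\<Sum>k<n. e k * (\<Sum>j<n. e j * a k j))"
    unfolding qf_def by (simp add: sum_distrib_left algebra_simps)
  also have "\<dots> = a i i" unfolding sd ..
  finally have qe: "qf n a e = a i i" .
  have de: "dot n x0 e = x0 i" unfolding dot_def using sd[of x0] by (simp add: mult.commute)
  have esq: "(e k)^2 = e k * 1" for k by (simp add: e_def)
  have ne: "nrm n e = 1" unfolding nrm_def esq sd ..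
  have "2*t*(s - M * x0 i) + t^2*(a i i - M) \<le> 0" for t
  proof -
    have "qf n a (\<lambda>j. x0 j + t * e j) \<le> M * nrm n (\<lambda>j. x0 j + t * e j)"
      unfolding M_def by (rule x0(2))
    then have "M + t * (s + s) + t^2 * a i i \<le> M * (1 + 2 * t * x0 i + t^2)"
      unfolding qf_add nrm_add b1 b2 qe de ne x0(1) M_def by simp
    then show ?thesis by (simp add: algebra_simps)
  qed
  from quad_nonpos[OF this] show ?thesis unfolding s_def M_def by simp
qed

lemma qf_abs_ge:
  assumes nn: "\<And>i j. a i j \<ge> 0"
  shows "- qf n a y \<le> qf n a (\<lambda>i. \<bar>y i\<bar>)"
proof -
  have "- qf n a y = (\<Sum>i<n. \<Sum>j<n. - (a i j * y i * y j))" unfolding qf_def by (simp add: sum_negf)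
  also have "\<dots> \<le> (\<Sum>i<n. \<Sum>j<n. a i j * \<bar>y i\<bar> * \<bar>y j\<bar>)"
  proof (intro sum_mono)
    fix i j
    have "- (y i * y j) \<le> \<bar>y i\<bar> * \<bar>y j\<bar>"
      by (metis abs_ge_minus_self abs_mult)
    then have "a i j * (- (y i * y j)) \<le> a i j * (\<bar>y i\<bar> * \<bar>y j\<bar>)"
      using nn by (rule mult_left_mono)
    then show "- (a i j * y i * y j) \<le> a i j * \<bar>y i\<bar> * \<bar>y j\<bar>" by (simp add: algebra_simps)
  qed
  finally show ?thesis unfolding qf_def .
qed

lemma nrm_abs: "nrm n (\<lambda>i. \<bar>y i\<bar>) = nrm n y"
  unfolding nrm_def by simp

lemma op_bound:
  assumes sym: "\<And>i j. a i j = a j i" and nn: "\<And>i j. a i j \<ge> 0"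
    and mx: "\<And>x. qf n a x \<le> M * nrm n x" and M: "M \<ge> 0"
  shows "(\<Sum>i<n. (\<Sum>j<n. a i j * x j)^2) \<le> M^2 * nrm n x"
proof -
  define z where "z = (\<lambda>i. \<Sum>j<n. a i j * x j)"
  define Z where "Z = (\<Sum>i<n. (z i)^2)"
  have nz: "nrm n z = Z" unfolding nrm_def Z_def ..
  have bxz: "bil n a x z = Z"
  proof -
    have "bil n a x z = (\<Sum>j<n. z j * (\<Sum>i<n. a i j * x i))"
      unfolding bil_def by (subst sum.swap) (simp add: sum_distrib_left algebra_simps)
    also have "\<dots> = (\<Sum>j<n. z j * z j)" unfolding z_def by (simp add: sym[of _ "_::nat"] mult.commute)
    finally show ?thesis unfolding Z_def power2_eq_square .
  qed
  have bzx: "bil n a z x = Z"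
  proof -
    have "bil n a z x = (\<Sum>i<n. z i * (\<Sum>j<n. a i j * x j))"
      unfolding bil_def by (simp add: sum_distrib_left algebra_simps)
    then show ?thesis unfolding Z_def power2_eq_square z_def by simp
  qed
  have low: "- qf n a y \<le> M * nrm n y" for y
    using qf_abs_ge[where a=a and n=n and y=y, OF nn] mx[of "\<lambda>i. \<bar>y i\<bar>"] nrm_abs[of n y] by simp
  have key: "4 * t * Z \<le> 2 * M * (nrm n x + t^2 * Z)" for t
  proof -
    have "qf n a (\<lambda>i. x i + t * z i) \<le> M * nrm n (\<lambda>i. x i + t * z i)" by (rule mx)
    moreover have "- qf n a (\<lambda>i. x i + (-t) * z i) \<le> M * nrm n (\<lambda>i. x i + (-t) * z i)" by (rule low)
    ultimately show ?thesis unfolding qf_add nrm_add bxz bzx nz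
      by (simp add: algebra_simps power2_eq_square)
  qed
  show ?thesis
  proof (cases "M = 0")
    case True
    then have "4 * Z \<le> 0" using key[of 1] by simp
    moreover have "Z \<ge> 0" unfolding Z_def by (intro sum_nonneg) auto
    ultimately show ?thesis using True unfolding Z_def z_def by simp
  next
    case False
    then have Mp: "M > 0" using M by simp
    have "4 * (1/M) * Z \<le> 2 * M * (nrm n x + (1/M)^2 * Z)" by (rule key)
    then have "4 * Z / M \<le> 2 * M * nrm n x + 2 * Z / M"
      using Mp by (simp add: algebra_simps power2_eq_square)
    then have "2 * Z / M \<le> 2 * M * nrm n x" by simp
    then have "Z \<le> M * M * nrm n x" using Mp by (simp add: divide_le_eq algebra_simps)
    then show ?thesis unfolding Z_def z_def power2_eq_square[of M] by simp
  qed
qed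

lemma spectral_lower:
  fixes F :: "nat \<Rightarrow> nat \<Rightarrow> bool"
  assumes sym: "\<And>x y. F x y \<Longrightarrow> F y x" and n: "n > 0"
  shows "\<exists>M. M \<ge> 0 \<and> M \<le> spectral_radius_graph n F \<and>
    (\<forall>x. (\<Sum>i<n. (\<Sum>j<n. (if F i j then 1 else 0) * x j)^2) \<le> M^2 * nrm n x)"
proof -
  define a where "a = (\<lambda>i j. if F i j then 1 else (0::real))"
  have asym: "a i j = a j i" for i j unfolding a_def using sym by auto
  have ann: "a i j \<ge> 0" for i j unfolding a_def by auto
  obtain x0 where x0: "nrm n x0 = 1" "\<And>x. qf n a x \<le> qf n a x0 * nrm n x"
    using rayleigh_max[OF n] by blast
  define M where "M = qf n a x0"
  have mx: "qf n a x \<le> M * nrm n x" for x unfolding M_def by (rule x0(2))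
  have M0: "M \<ge> 0"
  proof -
    have "- qf n a x0 \<le> qf n a (\<lambda>i. \<bar>x0 i\<bar>)" by (rule qf_abs_ge[where a=a, OF ann])
    also have "\<dots> \<le> M * nrm n (\<lambda>i. \<bar>x0 i\<bar>)" by (rule mx)
    finally show ?thesis using x0(1) unfolding nrm_abs M_def by simp
  qed
  have ev: "\<And>i. i < n \<Longrightarrow> (\<Sum>j<n. a i j * x0 j) = M * x0 i"
    unfolding M_def using eigen_eq[where a=a, OF asym x0] by blast
  define A where "A = adjacency_matrix n F"
  have A: "A \<in> carrier_mat n n" unfolding A_def adjacency_matrix_def by auto
  define v where "v = vec n x0"
  have vc: "v \<in> carrier_vec n" unfolding v_def by auto
  have v0: "v \<noteq> 0\<^sub>v n"
  proof
    assume vz: "v = 0\<^sub>v n"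
    have "x0 i = 0" if "i < n" for i
    proof -
      have "v $ i = (0\<^sub>v n) $ i" using vz by simp
      then show ?thesis using that unfolding v_def by simp
    qed
    then have "nrm n x0 = 0" unfolding nrm_def by simp
    then show False using x0(1) by simp
  qed
  have Av: "A *\<^sub>v v = M \<cdot>\<^sub>v v"
  proof (rule eq_vecI)
    show "dim_vec (A *\<^sub>v v) = dim_vec (M \<cdot>\<^sub>v v)" using A vc by simp
    fix i assume "i < dim_vec (M \<cdot>\<^sub>v v)"
    then have i: "i < n" using vc by simp
    have "(A *\<^sub>v v) $ i = row A i \<bullet> v" using A i by simp
    also have "\<dots> = (\<Sum>j<n. a i j * x0 j)"
      unfolding scalar_prod_def using A i
      by (simp add: v_def A_def adjacency_matrix_def a_def lessThan_atLeast0)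
    also have "\<dots> = M * x0 i" using ev[OF i] .
    also have "\<dots> = (M \<cdot>\<^sub>v v) $ i" using i by (simp add: v_def)
    finally show "(A *\<^sub>v v) $ i = (M \<cdot>\<^sub>v v) $ i" .
  qed
  have "eigenvalue A M"
    unfolding eigenvalue_def eigenvector_def using A vc v0 Av by auto
  moreover have "finite {k. eigenvalue A k}"
    using card_finite_spectrum(1)[OF A] unfolding spectrum_def by simp
  ultimately have "M \<le> spectral_radius_graph n F"
    unfolding spectral_radius_graph_def A_def[symmetric] by (simp add: Max_ge)
  moreover have "\<forall>x. (\<Sum>i<n. (\<Sum>j<n. a i j * x j)^2) \<le> M^2 * nrm n x"
    using op_bound[where a=a, OF asym ann mx M0] by blast
  ultimately show ?thesis using M0 unfolding a_def by blast
qed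



lemma rev_seg_path:
  fixes p :: "nat list"
  assumes sym: "\<And>x y. E x y \<Longrightarrow> E y x"
  and dist: "distinct p" and st: "1 \<le> s" "s \<le> t" "t + 1 < length p"
  and edges: "\<And>j. j+1 < length p \<Longrightarrow> j \<noteq> s - 1 \<Longrightarrow> j \<noteq> t \<Longrightarrow> E (p!j) (p!(j+1))"
  and c1: "E (p!(s-1)) (p!t)" and c2: "E (p!s) (p!(t+1))"
  shows "\<exists>q. length q = length p \<and> distinct q \<and> set q = set p \<and> hd q = hd p \<and> last q = last p
     \<and> (\<forall>j. j+1 < length q \<longrightarrow> E (q!j) (q!(j+1)))"
proof -
  define L where "L = length p"
  define \<sigma> where "\<sigma> j = (if s \<le> j \<and> j \<le> t then s + t - j else j)" for j
  have \<sigma>L: "\<sigma> j < L" if "j < L" for j using that st unfolding \<sigma>_def L_def by auto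
  have \<sigma>\<sigma>: "\<sigma> (\<sigma> j) = j" for j unfolding \<sigma>_def by auto
  define q where "q = map (\<lambda>j. p ! \<sigma> j) [0..<L]"
  have qn: "q ! j = p ! \<sigma> j" if "j < L" for j unfolding q_def using that by simp
  have lq: "length q = L" unfolding q_def by simp
  have "inj_on (\<lambda>j. p ! \<sigma> j) {0..<L}"
  proof (rule inj_onI)
    fix i j assume i: "i \<in> {0..<L}" and j: "j \<in> {0..<L}" and e: "p ! \<sigma> i = p ! \<sigma> j"
    have si: "\<sigma> i < length p" using \<sigma>L[of i] i unfolding L_def by simp
    have sj: "\<sigma> j < length p" using \<sigma>L[of j] j unfolding L_def by simp
    have "\<sigma> i = \<sigma> j" using nth_eq_iff_index_eq[OF dist si sj] e by simp
    then have "\<sigma> (\<sigma> i) = \<sigma> (\<sigma> j)" by simp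
    then show "i = j" unfolding \<sigma>\<sigma> .
  qed
  then have dq: "distinct q" unfolding q_def by (simp add: distinct_map)
  have sq: "set q = set p"
  proof
    show "set q \<subseteq> set p"
    proof
      fix x assume "x \<in> set q"
      then obtain j where j: "j < L" "x = p ! \<sigma> j" unfolding q_def by auto
      have "\<sigma> j < length p" using \<sigma>L[of j] j unfolding L_def by simp
      then show "x \<in> set p" using j(2) by simp
    qed
    show "set p \<subseteq> set q"
    proof
      fix x assume "x \<in> set p"
      then obtain j where j: "j < L" "x = p ! j" unfolding L_def by (auto simp: in_set_conv_nth)
      have sj: "\<sigma> j < L" using \<sigma>L[of j] j by simp
      have "x = (\<lambda>j. p ! \<sigma> j) (\<sigma> j)" using j by (simp add: \<sigma>\<sigma>)
      moreover have "\<sigma> j \<in> set [0..<L]" using sj by simp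
      ultimately show "x \<in> set q" unfolding q_def set_map by (rule image_eqI)
    qed
  qed
  have L0: "L > 0" using st unfolding L_def by auto
  have qne: "q \<noteq> []" using lq L0 by auto
  have pne: "p \<noteq> []" using L0 unfolding L_def by auto
  have s0: "\<sigma> 0 = 0" using st unfolding \<sigma>_def by auto
  have hq: "hd q = hd p"
  proof -
    have "hd q = q ! 0" using qne by (simp add: hd_conv_nth)
    also have "q ! 0 = p ! 0" using qn[of 0] L0 s0 by simp
    also have "\<dots> = hd p" using pne by (simp add: hd_conv_nth)
    finally show ?thesis .
  qed
  have s1: "\<sigma> (L - 1) = L - 1" using st unfolding \<sigma>_def L_def by auto
  have laq: "last q = last p"
  proof -
    have "last q = q ! (L - 1)" using qne lq by (simp add: last_conv_nth)
    also have "q ! (L - 1) = p ! (L - 1)" using qn[of "L-1"] L0 s1 by simp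
    also have "\<dots> = last p" using pne unfolding L_def by (simp add: last_conv_nth)
    finally show ?thesis .
  qed
  have eq: "E (q!j) (q!(j+1))" if j: "j + 1 < L" for j
  proof -
    have q1: "q ! j = p ! \<sigma> j" "q ! (j+1) = p ! \<sigma> (j+1)" using qn j by auto
    have lp: "L = length p" unfolding L_def ..
    consider (a) "j + 1 < s" | (b) "j + 1 = s" | (c) "s \<le> j \<and> j + 1 \<le> t" | (d) "j = t" | (e) "j > t"
      by linarith
    then show ?thesis
    proof cases
      case a
      have "\<sigma> j = j" "\<sigma> (j+1) = j + 1" unfolding \<sigma>_def using a by simp_all
      moreover have "j \<noteq> s - 1" "j \<noteq> t" using a st by arith+
      ultimately show ?thesis unfolding q1 using edges[of j] j lp by simp
    next
      case b
      have "\<sigma> j = s - 1" "\<sigma> (j+1) = t" unfolding \<sigma>_def using b st by simp_all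
      then show ?thesis unfolding q1 using c1 by simp
    next
      case c
      define m where "m = s + t - j - 1"
      have m1: "\<sigma> j = m + 1" unfolding \<sigma>_def m_def using c by (simp; arith)
      have m2: "\<sigma> (j+1) = m" unfolding \<sigma>_def m_def using c by simp
      have m3: "m \<noteq> s - 1" "m \<noteq> t" "m + 1 < length p" unfolding m_def using c st by arith+
      have "E (p!m) (p!(m+1))" using edges[OF m3(3) m3(1) m3(2)] .
      then show ?thesis unfolding q1 m1 m2 using sym by simp
    next
      case d
      have "\<sigma> j = s" "\<sigma> (j+1) = t + 1" unfolding \<sigma>_def using d st by simp_all
      then show ?thesis unfolding q1 using c2 d by simp
    next
      case e
      have "\<sigma> j = j" "\<sigma> (j+1) = j + 1" unfolding \<sigma>_def using e by simp_all
      moreover have "j \<noteq> s - 1" "j \<noteq> t" using e st by arith+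
      ultimately show ?thesis unfolding q1 using edges[of j] j lp by simp
    qed
  qed
  show ?thesis
    apply (rule exI[of _ q])
    using lq dq sq hq laq eq unfolding L_def by simp
qed

definition deg :: "nat \<Rightarrow> (nat \<Rightarrow> nat \<Rightarrow> bool) \<Rightarrow> nat \<Rightarrow> nat" where
  "deg n E u = card {w. w < n \<and> E u w}"

lemma core:
  fixes p :: "nat list"
  assumes sym: "\<And>x y. E x y \<Longrightarrow> E y x" and irr: "\<And>x. \<not> E x x"
  and dist: "distinct p" and sp: "set p = {0..<n}" and k: "k + 1 < n"
  and pu: "p!k = u" and pv: "p!(k+1) = v"
  and dg: "deg n E u + deg n E v \<ge> n + 1"
  and edges: "\<And>j. j+1 < n \<Longrightarrow> j \<noteq> k \<Longrightarrow> E (p!j) (p!(j+1))"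
  shows "\<exists>q. length q = n \<and> distinct q \<and> set q = set p \<and> hd q = hd p \<and> last q = last p
     \<and> (\<forall>j. j+1 < length q \<longrightarrow> E (q!j) (q!(j+1)))"
proof -
  have lp: "length p = n" using distinct_card[OF dist] sp by simp
  define T where "T = {i. i < n \<and> E u (p!i)}"
  define S where "S = {i. i < n \<and> E v (p!i)}"
  have injp: "inj_on (\<lambda>i. p!i) {0..<n}"
    using dist lp by (simp add: inj_on_def nth_eq_iff_index_eq)
  have im: "(\<lambda>i. p!i) ` {i. i < n \<and> E w (p!i)} = {x. x < n \<and> E w x}" for w
  proof
    show "(\<lambda>i. p!i) ` {i. i < n \<and> E w (p!i)} \<subseteq> {x. x < n \<and> E w x}"
    proof
      fix x assume "x \<in> (\<lambda>i. p!i) ` {i. i < n \<and> E w (p!i)}"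
      then obtain i where i: "i < n" "E w (p!i)" "x = p!i" by auto
      have "p!i \<in> set p" using i lp by simp
      then show "x \<in> {x. x < n \<and> E w x}" using i sp by auto
    qed
    show "{x. x < n \<and> E w x} \<subseteq> (\<lambda>i. p!i) ` {i. i < n \<and> E w (p!i)}"
    proof
      fix x assume x: "x \<in> {x. x < n \<and> E w x}"
      then have "x \<in> set p" using sp by auto
      then obtain i where i: "i < n" "x = p!i" using lp by (auto simp: in_set_conv_nth)
      then show "x \<in> (\<lambda>i. p!i) ` {i. i < n \<and> E w (p!i)}" using x by auto
    qed
  qed
  have cT: "card T = deg n E u"
  proof -
    have "inj_on (\<lambda>i. p!i) T" using injp by (rule inj_on_subset) (auto simp: T_def)
    then have "card ((\<lambda>i. p!i) ` T) = card T" by (rule card_image)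
    then show ?thesis unfolding T_def im deg_def by simp
  qed
  have cS: "card S = deg n E v"
  proof -
    have "inj_on (\<lambda>i. p!i) S" using injp by (rule inj_on_subset) (auto simp: S_def)
    then have "card ((\<lambda>i. p!i) ` S) = card S" by (rule card_image)
    then show ?thesis unfolding S_def im deg_def by simp
  qed
  have "\<exists>i. i \<in> T \<and> Suc i \<in> S \<and> i \<noteq> k"
  proof (rule ccontr)
    assume no: "\<not> (\<exists>i. i \<in> T \<and> Suc i \<in> S \<and> i \<noteq> k)"
    have kT: "k \<notin> T" unfolding T_def using pu irr by simp
    have kS: "Suc k \<notin> S" unfolding S_def using pv irr by simp
    have disj: "Suc ` T \<inter> S = {}"
    proof (rule ccontr)
      assume "Suc ` T \<inter> S \<noteq> {}"
      then obtain i where "i \<in> T" "Suc i \<in> S" by auto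
      with no kT show False by auto
    qed
    have sub: "Suc ` T \<union> S \<subseteq> {0..n} - {Suc k}"
      using kT kS unfolding T_def S_def by auto
    have fT: "finite T" unfolding T_def by auto
    have fS: "finite S" unfolding S_def by auto
    have "card (Suc ` T \<union> S) = card (Suc ` T) + card S"
      using fT fS disj by (simp add: card_Un_disjoint)
    also have "card (Suc ` T) = card T" by (simp add: card_image)
    finally have "card T + card S = card (Suc ` T \<union> S)" by simp
    also have "\<dots> \<le> card ({0..n} - {Suc k})" using sub by (intro card_mono) auto
    also have "\<dots> = n" using k by simp
    finally show False using dg cT cS by simp
  qed
  then obtain i where i: "i < n" "E u (p!i)" "Suc i < n" "E v (p!(Suc i))" "i \<noteq> k"
    unfolding T_def S_def by auto
  show ?thesis
  proof (cases "i < k")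
    case True
    have "\<exists>q. length q = length p \<and> distinct q \<and> set q = set p \<and> hd q = hd p \<and> last q = last p
     \<and> (\<forall>j. j+1 < length q \<longrightarrow> E (q!j) (q!(j+1)))"
    proof (rule rev_seg_path[where E=E and s="i+1" and t=k, OF sym dist])
      show "1 \<le> i + 1" by simp
      show "i + 1 \<le> k" using True by simp
      show "k + 1 < length p" using k lp by simp
      show "E (p ! j) (p ! (j + 1))" if "j + 1 < length p" "j \<noteq> i + 1 - 1" "j \<noteq> k" for j
        using edges that lp by simp
      show "E (p ! (i + 1 - 1)) (p ! k)" using i(2) pu sym by simp
      show "E (p ! (i + 1)) (p ! (k + 1))" using i(4) pv sym by simp
    qed
    then show ?thesis using lp by simp
  next
    case False
    then have ik: "k < i" using i(5) by simp
    have "\<exists>q. length q = length p \<and> distinct q \<and> set q = set p \<and> hd q = hd p \<and> last q = last p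
     \<and> (\<forall>j. j+1 < length q \<longrightarrow> E (q!j) (q!(j+1)))"
    proof (rule rev_seg_path[where E=E and s="k+1" and t=i, OF sym dist])
      show "1 \<le> k + 1" by simp
      show "k + 1 \<le> i" using ik by simp
      show "i + 1 < length p" using i(3) lp by simp
      show "E (p ! j) (p ! (j + 1))" if "j + 1 < length p" "j \<noteq> k + 1 - 1" "j \<noteq> i" for j
        using edges that lp by simp
      show "E (p ! (k + 1 - 1)) (p ! i)" using i(2) pu by simp
      show "E (p ! (k + 1)) (p ! (i + 1))" using i(4) pv by simp
    qed
    then show ?thesis using lp by simp
  qed
qed

lemma closure_step:
  assumes sg: "simple_graph n E" and u: "u < n" and v: "v < n" and uv: "u \<noteq> v"
    and nuv: "\<not> E u v" and dg: "deg n E u + deg n E v \<ge> n + 1"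
    and hc: "hamilton_connected n (\<lambda>x y. E x y \<or> (x = u \<and> y = v) \<or> (x = v \<and> y = u))"
  shows "hamilton_connected n E"
  unfolding hamilton_connected_def
proof (intro allI impI)
  fix x y assume xy: "x < n \<and> y < n \<and> x \<noteq> y"
  have sym: "\<And>a b. E a b \<Longrightarrow> E b a" and irr: "\<And>a. \<not> E a a" using sg unfolding simple_graph_def by auto
  obtain p where hp: "hamiltonian_path n (\<lambda>x y. E x y \<or> (x = u \<and> y = v) \<or> (x = v \<and> y = u)) x y p"
    using hc xy unfolding hamilton_connected_def by blast
  then have pne: "p \<noteq> []" and dist: "distinct p" and sp: "set p = {0..<n}" and hd: "hd p = x"
    and la: "last p = y"
    and ed: "\<And>i. Suc i < length p \<Longrightarrow> E (p!i) (p!Suc i) \<or> (p!i = u \<and> p!Suc i = v) \<or> (p!i = v \<and> p!Suc i = u)"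
    unfolding hamiltonian_path_def by auto
  have lp: "length p = n" using distinct_card[OF dist] sp by simp
  have idx: "\<And>a b. a < n \<Longrightarrow> b < n \<Longrightarrow> p!a = p!b \<Longrightarrow> a = b"
    using nth_eq_iff_index_eq[OF dist] lp by auto
  show "\<exists>p. hamiltonian_path n E x y p"
  proof (cases "\<forall>j. j+1 < n \<longrightarrow> E (p!j) (p!(j+1))")
    case True
    then show ?thesis unfolding hamiltonian_path_def using pne dist sp hd la lp by auto
  next
    case False
    then obtain k where k: "k + 1 < n" "\<not> E (p!k) (p!(k+1))" by auto
    have ek: "(p!k = u \<and> p!(k+1) = v) \<or> (p!k = v \<and> p!(k+1) = u)" using ed[of k] k lp by auto
    have oth: "E (p!j) (p!(j+1))" if j: "j + 1 < n" "j \<noteq> k" for j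
    proof (rule ccontr)
      assume ne: "\<not> E (p!j) (p!(j+1))"
      have ej: "(p!j = u \<and> p!(j+1) = v) \<or> (p!j = v \<and> p!(j+1) = u)" using ed[of j] j lp ne by auto
      have "p!j = p!k \<or> (p!j = p!(k+1) \<and> p!(j+1) = p!k)" using ej ek uv by auto
      then show False
      proof
        assume "p!j = p!k" then have "j = k" using idx j k by simp
        then show False using j by simp
      next
        assume a: "p!j = p!(k+1) \<and> p!(j+1) = p!k"
        then have "j = k + 1" using idx j k by simp
        moreover have "j + 1 = k" using a idx j k by simp
        ultimately show False by simp
      qed
    qed
    have dgs: "deg n E v + deg n E u \<ge> n + 1" using dg by simp
    have "\<exists>q. length q = n \<and> distinct q \<and> set q = set p \<and> hd q = hd p \<and> last q = last p
     \<and> (\<forall>j. j+1 < length q \<longrightarrow> E (q!j) (q!(j+1)))"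
      using ek
    proof
      assume "p!k = u \<and> p!(k+1) = v"
      then show ?thesis using core[where E=E, OF sym irr dist sp k(1) _ _ dg oth] by blast
    next
      assume "p!k = v \<and> p!(k+1) = u"
      then show ?thesis using core[where E=E, OF sym irr dist sp k(1) _ _ dgs oth] by blast
    qed
    then obtain q where q: "length q = n" "distinct q" "set q = set p" "hd q = hd p" "last q = last p"
      "\<forall>j. j+1 < length q \<longrightarrow> E (q!j) (q!(j+1))" by blast
    have "q \<noteq> []" using q(1) k by auto
    then have "hamiltonian_path n E x y q" unfolding hamiltonian_path_def using q sp hd la by auto
    then show ?thesis by blast
  qed
qed

lemma complete_hc:
  assumes "\<And>x y. x < n \<Longrightarrow> y < n \<Longrightarrow> x \<noteq> y \<Longrightarrow> H x y"
  shows "hamilton_connected n H"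
  unfolding hamilton_connected_def
proof (intro allI impI)
  fix x y assume xy: "x < n \<and> y < n \<and> x \<noteq> y"
  define p where "p = x # filter (\<lambda>w. w \<noteq> x \<and> w \<noteq> y) [0..<n] @ [y]"
  have dist: "distinct p" unfolding p_def using xy by auto
  have sp: "set p = {0..<n}" unfolding p_def using xy by auto
  have "H (p!j) (p!(j+1))" if j: "j + 1 < length p" for j
  proof -
    have "p!j \<in> set p" "p!(j+1) \<in> set p" using j by auto
    then have "p!j < n" "p!(j+1) < n" using sp by auto
    moreover have "p!j \<noteq> p!(j+1)" using nth_eq_iff_index_eq[OF dist, of j "j+1"] j by simp
    ultimately show ?thesis using assms by blast
  qed
  then have "hamiltonian_path n H x y p" unfolding hamiltonian_path_def using dist sp
    by (auto simp: p_def)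
  then show "\<exists>p. hamiltonian_path n H x y p" by blast
qed

lemma stable_exists:
  assumes "simple_graph n E" "\<not> hamilton_connected n E"
  shows "\<exists>H. simple_graph n H \<and> (\<forall>x y. E x y \<longrightarrow> H x y) \<and> \<not> hamilton_connected n H \<and>
    (\<forall>x y. x < n \<longrightarrow> y < n \<longrightarrow> x \<noteq> y \<longrightarrow> \<not> H x y \<longrightarrow> deg n H x + deg n H y \<le> n)"
proof -
  define nonE where "nonE E = {(x,y). x < n \<and> y < n \<and> x \<noteq> y \<and> \<not> E x y}" for E :: "nat \<Rightarrow> nat \<Rightarrow> bool"
  have fin: "finite (nonE E)" for E
  proof -
    have "nonE E \<subseteq> {..<n} \<times> {..<n}" unfolding nonE_def by auto
    then show ?thesis by (rule finite_subset) auto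
  qed
  have main: "\<forall>E. card (nonE E) = m \<longrightarrow> simple_graph n E \<longrightarrow> \<not> hamilton_connected n E \<longrightarrow>
    (\<exists>H. simple_graph n H \<and> (\<forall>x y. E x y \<longrightarrow> H x y) \<and> \<not> hamilton_connected n H \<and>
    (\<forall>x y. x < n \<longrightarrow> y < n \<longrightarrow> x \<noteq> y \<longrightarrow> \<not> H x y \<longrightarrow> deg n H x + deg n H y \<le> n))" for m
  proof (induction m rule: less_induct)
    case (less m)
    show ?case
    proof (intro allI impI)
      fix E assume cm: "card (nonE E) = m" and sg: "simple_graph n E" and nh: "\<not> hamilton_connected n E"
      show "\<exists>H. simple_graph n H \<and> (\<forall>x y. E x y \<longrightarrow> H x y) \<and> \<not> hamilton_connected n H \<and>
        (\<forall>x y. x < n \<longrightarrow> y < n \<longrightarrow> x \<noteq> y \<longrightarrow> \<not> H x y \<longrightarrow> deg n H x + deg n H y \<le> n)"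
      proof (cases "\<forall>x y. x < n \<longrightarrow> y < n \<longrightarrow> x \<noteq> y \<longrightarrow> \<not> E x y \<longrightarrow> deg n E x + deg n E y \<le> n")
        case True
        then show ?thesis using sg nh by blast
      next
        case False
        then obtain u v where uv: "u < n" "v < n" "u \<noteq> v" "\<not> E u v" "deg n E u + deg n E v \<ge> n + 1"
          by (auto simp: not_le)
        define E' where "E' = (\<lambda>x y. E x y \<or> (x = u \<and> y = v) \<or> (x = v \<and> y = u))"
        have sg': "simple_graph n E'" using sg uv unfolding simple_graph_def E'_def by auto
        have nh': "\<not> hamilton_connected n E'"
          using closure_step[OF sg uv] nh unfolding E'_def by blast
        have "nonE E' \<subset> nonE E"
        proof
          show "nonE E' \<subseteq> nonE E" unfolding nonE_def E'_def by auto
          have "(u, v) \<in> nonE E" unfolding nonE_def using uv by auto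
          moreover have "(u, v) \<notin> nonE E'" unfolding nonE_def E'_def by auto
          ultimately show "nonE E' \<noteq> nonE E" by blast
        qed
        then have "card (nonE E') < m" using cm psubset_card_mono[OF fin[of E]] by blast
        then obtain H where H: "simple_graph n H" "\<forall>x y. E' x y \<longrightarrow> H x y" "\<not> hamilton_connected n H"
          "\<forall>x y. x < n \<longrightarrow> y < n \<longrightarrow> x \<noteq> y \<longrightarrow> \<not> H x y \<longrightarrow> deg n H x + deg n H y \<le> n"
          using less.IH sg' nh' by blast
        moreover have "\<forall>x y. E x y \<longrightarrow> H x y" using H(2) unfolding E'_def by blast
        ultimately show ?thesis by blast
      qed
    qed
  qed
  show ?thesis using main assms by blast
qed



lemma sum_split2:
  fixes f :: "nat \<Rightarrow> real"
  assumes "finite A" "u \<in> A" "v \<in> A" "u \<noteq> v"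
  shows "(\<Sum>i\<in>A. f i) = f u + f v + (\<Sum>i\<in>A - {u, v}. f i)"
proof -
  have "A = insert u (insert v (A - {u, v}))" using assms by auto
  then have "(\<Sum>i\<in>A. f i) = (\<Sum>i\<in>insert u (insert v (A - {u, v})). f i)" by simp
  also have "\<dots> = f u + f v + (\<Sum>i\<in>A - {u, v}. f i)" using assms by simp
  finally show ?thesis .
qed

lemma sum_ind_card:
  assumes "finite A"
  shows "(\<Sum>i\<in>A. if P i then 1 else (0::real)) = real (card {i\<in>A. P i})"
  using sum.inter_filter[OF assms, of "\<lambda>_. (1::real)" P] by simp

lemma comb:
  fixes Hc :: "nat \<Rightarrow> nat \<Rightarrow> bool" and b :: "nat \<Rightarrow> nat \<Rightarrow> real"
  assumes bnd: "\<And>x y. Hc x y \<Longrightarrow> x < n \<and> y < n" and sym: "\<And>x y. Hc x y \<Longrightarrow> Hc y x"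
    and irr: "\<And>x. \<not> Hc x x"
    and n4: "n \<ge> 4" and uv: "Hc u v"
    and bdef: "\<And>i j. b i j = (if Hc i j then 1 else 0)"
    and es: "\<And>x y. Hc x y \<Longrightarrow> (\<Sum>j<n. b x j) + (\<Sum>j<n. b y j) \<ge> real n - 2"
  shows "\<exists>x. (\<forall>i. x i \<ge> 0) \<and> nrm n x > 0 \<and>
     (real n - 2)^2 * nrm n x \<le> real n * (\<Sum>i<n. (\<Sum>j<n. b i j * x j)^2)"
proof -
  define dc where "dc i = (\<Sum>j<n. b i j)" for i
  define D where "D = (\<Sum>i<n. dc i)"
  have bsym: "b i j = b j i" for i j using sym bdef by auto
  have bnn: "b i j \<ge> 0" for i j using bdef by auto
  have es': "Hc x y \<Longrightarrow> dc x + dc y \<ge> real n - 2" for x y using es unfolding dc_def by blast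
  have E1: "(real n - 2) * D \<le> 2 * (\<Sum>i<n. (dc i)^2)"
  proof -
    have s1: "(\<Sum>i<n. (dc i)^2) = (\<Sum>i<n. \<Sum>j<n. b i j * dc i)"
      by (simp add: dc_def power2_eq_square sum_distrib_right)
    have s2: "(\<Sum>i<n. \<Sum>j<n. b i j * dc j) = (\<Sum>i<n. (dc i)^2)"
      by (subst sum.swap) (simp add: bsym[of _ "_::nat"] dc_def sum_distrib_right power2_eq_square)
    have pt: "b i j * (real n - 2) \<le> b i j * dc i + b i j * dc j" for i j
      using es'[of i j] bdef[of i j] by auto
    have "(real n - 2) * D = (\<Sum>i<n. \<Sum>j<n. b i j * (real n - 2))"
      unfolding D_def dc_def by (simp add: sum_distrib_left sum_distrib_right mult.commute)
    also have "\<dots> \<le> (\<Sum>i<n. \<Sum>j<n. b i j * dc i + b i j * dc j)"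
      by (intro sum_mono pt)
    also have "\<dots> = 2 * (\<Sum>i<n. (dc i)^2)" using s1 s2 by (simp add: sum.distrib)
    finally show ?thesis .
  qed
  have n2: "real n - 2 \<ge> 0" using n4 by simp
  show ?thesis
  proof (cases "D \<ge> 2 * real n - 4")
    case True
    define x where "x = (\<lambda>i::nat. (1::real))"
    have nx: "nrm n x = real n" unfolding nrm_def x_def by simp
    have ax: "(\<Sum>j<n. b i j * x j) = dc i" for i unfolding x_def dc_def by simp
    have "(real n - 2) * (2 * real n - 4) \<le> (real n - 2) * D"
      using True n2 by (rule mult_left_mono)
    then have "(real n - 2)^2 \<le> (\<Sum>i<n. (dc i)^2)" using E1 by (simp add: power2_eq_square algebra_simps)
    then have m: "real n * (real n - 2)^2 \<le> real n * (\<Sum>i<n. (dc i)^2)" by (rule mult_left_mono) simp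
    show ?thesis
    proof (intro exI[of _ x] conjI)
      show "\<forall>i. 0 \<le> x i" by (simp add: x_def)
      show "nrm n x > 0" using nx n4 by simp
      show "(real n - 2)^2 * nrm n x \<le> real n * (\<Sum>i<n. (\<Sum>j<n. b i j * x j)^2)"
        unfolding ax nx using m by (simp add: mult.commute)
    qed
  next
    case False
    have u: "u < n" and v: "v < n" and uneqv: "u \<noteq> v" using bnd[OF uv] uv irr by auto
    define R where "R = {..<n} - {u, v}"
    have sumR: "(\<Sum>i<n. f i) = f u + f v + (\<Sum>i\<in>R. f i)" for f :: "nat \<Rightarrow> real"
      unfolding R_def using sum_split2[of "{..<n}" u v f] u v uneqv by simp
    have colu: "(\<Sum>i\<in>R. b i u) = dc u - 1"
    proof -
      have "dc u = (\<Sum>i<n. b i u)" unfolding dc_def by (simp add: bsym[of u])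
      also have "\<dots> = b u u + b v u + (\<Sum>i\<in>R. b i u)" by (rule sumR)
      finally show ?thesis using bdef[of u u] bdef[of v u] irr sym[OF uv] by simp
    qed
    have colv: "(\<Sum>i\<in>R. b i v) = dc v - 1"
    proof -
      have "dc v = (\<Sum>i<n. b i v)" unfolding dc_def by (simp add: bsym[of v])
      also have "\<dots> = b u v + b v v + (\<Sum>i\<in>R. b i v)" by (rule sumR)
      finally show ?thesis using bdef[of v v] bdef[of u v] irr uv by simp
    qed
    have low: "b i u + b i v \<le> dc i" for i
    proof -
      have "(\<Sum>j\<in>{u,v}. b i j) \<le> (\<Sum>j<n. b i j)"
        using u v bnn by (intro sum_mono2) auto
      then show ?thesis unfolding dc_def using uneqv by simp
    qed
    have Dsplit: "D = dc u + dc v + (\<Sum>i\<in>R. dc i)" unfolding D_def by (rule sumR)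
    have E2: "D \<ge> 2 * (dc u + dc v) - 2"
    proof -
      have "(\<Sum>i\<in>R. b i u + b i v) \<le> (\<Sum>i\<in>R. dc i)" by (intro sum_mono low)
      then show ?thesis unfolding Dsplit using colu colv by (simp add: sum.distrib)
    qed
    have E3: "D \<ge> 2 * (dc u + dc v)" if wz: "Hc w z" "\<not> Hc w u" "\<not> Hc w v" for w z
    proof -
      have w: "w < n" "z < n" using bnd[OF wz(1)] by auto
      have wu: "w \<noteq> u" using wz(3) uv by auto
      have wv: "w \<noteq> v" using wz(2) sym[OF uv] by auto
      have zu: "z \<noteq> u" using wz(1,2) by auto
      have zv: "z \<noteq> v" using wz(1,3) by auto
      have wzn: "w \<noteq> z" using wz(1) irr by auto
      have wR: "w \<in> R" "z \<in> R" unfolding R_def using w wu wv zu zv by auto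
      have fR: "finite R" unfolding R_def by auto
      have lw: "b w u + b w v + 1 \<le> dc w"
      proof -
        have "b w z \<le> dc w" unfolding dc_def using w bnn by (intro member_le_sum) auto
        then show ?thesis using bdef[of w u] bdef[of w v] bdef[of w z] wz by simp
      qed
      have lz: "b z u + b z v + 1 \<le> dc z"
      proof -
        have "(\<Sum>j\<in>{u,v,w}. b z j) \<le> (\<Sum>j<n. b z j)"
          using u v w bnn by (intro sum_mono2) auto
        moreover have "(\<Sum>j\<in>{u,v,w}. b z j) = b z u + b z v + b z w"
          using uneqv wu wv by simp
        moreover have "b z w = 1" using bdef[of z w] sym[OF wz(1)] by simp
        ultimately show ?thesis unfolding dc_def by simp
      qed
      have "(\<Sum>i\<in>R. dc i) = dc w + dc z + (\<Sum>i\<in>R - {w,z}. dc i)"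
        by (rule sum_split2[OF fR wR wzn])
      moreover have "(\<Sum>i\<in>R. b i u + b i v) = (b w u + b w v) + (b z u + b z v) + (\<Sum>i\<in>R - {w,z}. b i u + b i v)"
        by (rule sum_split2[OF fR wR wzn])
      moreover have "(\<Sum>i\<in>R - {w,z}. b i u + b i v) \<le> (\<Sum>i\<in>R - {w,z}. dc i)" by (intro sum_mono low)
      ultimately have "(\<Sum>i\<in>R. b i u + b i v) + 2 \<le> (\<Sum>i\<in>R. dc i)" using lw lz by linarith
      then show ?thesis unfolding Dsplit using colu colv by (simp add: sum.distrib)
    qed
    have ac: "dc u + dc v \<ge> real n - 2" using es'[OF uv] .
    have ac2: "dc u + dc v < real n - 1" using E2 False by (simp add: algebra_simps not_le)
    define T where "T = {j. j < n \<and> (Hc u j \<or> Hc v j)}"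
    have clos: "j \<in> T" if "Hc i j" for i j
    proof (rule ccontr)
      assume "j \<notin> T"
      then have "\<not> Hc j u" "\<not> Hc j v" using bnd[OF that] sym unfolding T_def by auto
      then have "D \<ge> 2 * (dc u + dc v)" using E3[of j i] sym[OF that] by blast
      then show False using ac False by (simp add: algebra_simps not_le)
    qed
    define x where "x = (\<lambda>j. if j \<in> T then (1::real) else 0)"
    have ax: "(\<Sum>j<n. b i j * x j) = dc i" for i
      unfolding dc_def x_def by (intro sum.cong refl) (auto simp: bdef clos)
    have fT: "finite T" unfolding T_def by auto
    have nx: "nrm n x = real (card T)"
    proof -
      have "nrm n x = (\<Sum>j<n. if j \<in> T then 1 else (0::real))"
        unfolding nrm_def x_def by (intro sum.cong refl) auto
      also have "\<dots> = real (card {j\<in>{..<n}. j \<in> T})" by (rule sum_ind_card) simp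
      also have "{j\<in>{..<n}. j \<in> T} = T" unfolding T_def by auto
      finally show ?thesis .
    qed
    have dcard: "dc w = real (card {j\<in>{..<n}. Hc w j})" for w
      unfolding dc_def bdef by (rule sum_ind_card) simp
    have "T = {j\<in>{..<n}. Hc u j} \<union> {j\<in>{..<n}. Hc v j}" unfolding T_def by auto
    then have "card T \<le> card {j\<in>{..<n}. Hc u j} + card {j\<in>{..<n}. Hc v j}"
      by (simp add: card_Un_le)
    then have "real (card T) \<le> dc u + dc v" unfolding dcard by linarith
    then have "real (card T) < real n - 1" using ac2 by linarith
    then have "card T + 2 \<le> n" by linarith
    then have cT: "real (card T) \<le> real n - 2" by linarith
    have "v \<in> T" unfolding T_def using uv v by auto
    then have cT0: "card T > 0" using fT by (auto simp: card_gt_0_iff)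
    have S: "(real n - 2) * (real n - 3) \<le> (\<Sum>i<n. (dc i)^2)"
    proof -
      have "D \<ge> 2 * real n - 6" using E2 ac by (smt (verit))
      then have "(real n - 2) * (2 * real n - 6) \<le> (real n - 2) * D" using n2 by (rule mult_left_mono)
      then show ?thesis using E1 by (simp add: algebra_simps)
    qed
    define N where "N = real n"
    have N4: "N \<ge> 4" unfolding N_def using n4 by simp
    have "(N - 2)^2 * real (card T) \<le> (N - 2)^2 * (N - 2)"
      using cT unfolding N_def by (intro mult_left_mono) auto
    also have "\<dots> \<le> N * ((N - 2) * (N - 3))"
    proof -
      have "0 \<le> (N - 2) * (N - 4)" using N4 by simp
      then show ?thesis by (simp add: algebra_simps power2_eq_square)
    qed
    also have "\<dots> \<le> N * (\<Sum>i<n. (dc i)^2)" using S N4 unfolding N_def by (intro mult_left_mono) auto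
    finally have fin: "(N - 2)^2 * real (card T) \<le> N * (\<Sum>i<n. (dc i)^2)" .
    show ?thesis
      apply (rule exI[of _ x])
      using fin cT0 unfolding ax nx N_def by (auto simp: x_def)
  qed
qed


theorem theorem3p2:
  fixes n :: nat and E :: "nat \<Rightarrow> nat \<Rightarrow> bool"
  assumes "simple_graph n E"
    and "n \<ge> 4"
    and "spectral_radius_graph n (complement n E) < sqrt ((real n - 2)^2 / real n)"
  shows "hamilton_connected n E"
proof (rule ccontr)
  assume nh: "\<not> hamilton_connected n E"
  obtain H where H: "simple_graph n H" "\<forall>x y. E x y \<longrightarrow> H x y" "\<not> hamilton_connected n H"
    "\<forall>x y. x < n \<longrightarrow> y < n \<longrightarrow> x \<noteq> y \<longrightarrow> \<not> H x y \<longrightarrow> deg n H x + deg n H y \<le> n"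
    using stable_exists[OF assms(1) nh] by blast
  have Hsym: "\<And>x y. H x y \<Longrightarrow> H y x" and Hirr: "\<And>x. \<not> H x x"
    and Hbnd: "\<And>x y. H x y \<Longrightarrow> x < n \<and> y < n"
    using H(1) unfolding simple_graph_def by auto
  obtain u v where uv: "u < n" "v < n" "u \<noteq> v" "\<not> H u v"
    using complete_hc[of n H] H(3) by blast
  define Hc where "Hc = complement n H"
  define F where "F = complement n E"
  have Hcbnd: "\<And>x y. Hc x y \<Longrightarrow> x < n \<and> y < n" unfolding Hc_def complement_def by auto
  have Hcsym: "\<And>x y. Hc x y \<Longrightarrow> Hc y x" unfolding Hc_def complement_def using Hsym by blast
  have Hcirr: "\<And>x. \<not> Hc x x" unfolding Hc_def complement_def by auto
  have HcF: "\<And>x y. Hc x y \<Longrightarrow> F x y" unfolding Hc_def F_def complement_def using H(2) by blast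
  have Fsym: "\<And>x y. F x y \<Longrightarrow> F y x"
    using assms(1) unfolding F_def complement_def simple_graph_def by blast
  have Hcuv: "Hc u v" unfolding Hc_def complement_def using uv by auto
  define b where "b = (\<lambda>i j. if Hc i j then 1 else (0::real))"
  have bdef: "\<And>i j. b i j = (if Hc i j then 1 else 0)" unfolding b_def by simp
  have cardc: "real (card {j\<in>{..<n}. Hc x j}) = real n - 1 - real (deg n H x)" if x: "x < n" for x
  proof -
    have un: "{j\<in>{..<n}. Hc x j} \<union> {w. w < n \<and> H x w} = {..<n} - {x}"
      unfolding Hc_def complement_def using x Hirr by auto
    have di: "{j\<in>{..<n}. Hc x j} \<inter> {w. w < n \<and> H x w} = {}"
      unfolding Hc_def complement_def by auto
    have "card {j\<in>{..<n}. Hc x j} + card {w. w < n \<and> H x w} = card ({..<n} - {x})"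
      unfolding un[symmetric] by (rule card_Un_disjoint[symmetric]) (use di in auto)
    also have "\<dots> = n - 1" using x by simp
    finally have "card {j\<in>{..<n}. Hc x j} + deg n H x = n - 1" unfolding deg_def .
    then show ?thesis using x by linarith
  qed
  have es: "(\<Sum>j<n. b x j) + (\<Sum>j<n. b y j) \<ge> real n - 2" if xy: "Hc x y" for x y
  proof -
    have x: "x < n" "y < n" "x \<noteq> y" "\<not> H x y" using xy Hcirr unfolding Hc_def complement_def by auto
    have d: "deg n H x + deg n H y \<le> n" using H(4) x by blast
    have "(\<Sum>j<n. b x j) = real (card {j\<in>{..<n}. Hc x j})" unfolding b_def by (rule sum_ind_card) simp
    moreover have "(\<Sum>j<n. b y j) = real (card {j\<in>{..<n}. Hc y j})" unfolding b_def by (rule sum_ind_card) simp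
    ultimately show ?thesis using cardc[OF x(1)] cardc[OF x(2)] d by linarith
  qed
  obtain x where x: "\<forall>i. x i \<ge> 0" "nrm n x > 0"
    "(real n - 2)^2 * nrm n x \<le> real n * (\<Sum>i<n. (\<Sum>j<n. b i j * x j)^2)"
    using comb[where Hc=Hc and n=n and b=b and u=u and v=v, OF Hcbnd Hcsym Hcirr assms(2) Hcuv bdef es] by blast
  have n0: "n > 0" using assms(2) by simp
  obtain M where M: "M \<ge> 0" "M \<le> spectral_radius_graph n F"
    "\<forall>x. (\<Sum>i<n. (\<Sum>j<n. (if F i j then 1 else 0) * x j)^2) \<le> M^2 * nrm n x"
    using spectral_lower[where F=F and n=n, OF Fsym n0] by blast
  have "(\<Sum>i<n. (\<Sum>j<n. b i j * x j)^2) \<le> (\<Sum>i<n. (\<Sum>j<n. (if F i j then 1 else 0) * x j)^2)"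
  proof (rule sum_mono)
    fix i assume "i \<in> {..<n}"
    have "(\<Sum>j<n. b i j * x j) \<le> (\<Sum>j<n. (if F i j then 1 else 0) * x j)"
      using x(1) HcF unfolding b_def by (intro sum_mono) auto
    moreover have "0 \<le> (\<Sum>j<n. b i j * x j)" using x(1) unfolding b_def by (intro sum_nonneg) auto
    ultimately show "(\<Sum>j<n. b i j * x j)^2 \<le> (\<Sum>j<n. (if F i j then 1 else 0) * x j)^2"
      by (simp add: power_mono)
  qed
  also have "\<dots> \<le> M^2 * nrm n x" using M(3) by blast
  finally have "(real n - 2)^2 * nrm n x \<le> real n * (M^2 * nrm n x)"
    using x(3) n0 by (meson mult_left_mono of_nat_0_le_iff order_trans)
  then have "(real n - 2)^2 \<le> real n * M^2" using x(2) by (simp add: mult.assoc[symmetric])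
  then have "(real n - 2)^2 / real n \<le> M^2" using n0 by (simp add: divide_le_eq mult.commute)
  then have "sqrt ((real n - 2)^2 / real n) \<le> sqrt (M^2)" by (rule real_sqrt_le_mono)
  also have "\<dots> = M" using M(1) by simp
  finally show False using M(2) assms(3) unfolding F_def by simp
qed

end
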